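(* Let $T\subseteq\mathbb{N}^{<\mathbb{N}}$ be a tree, order $\mathcal{JT}(T)$ by the Kleene–Brouwer ordering $\leq_{\mathrm{KB}}$, and define $h\colon T\to\boldsymbol\omega^{\mathcal{JT}(T)}$ by $h(\emptyset)=\omega^{\emptyset}\cdot3$ and, for $\sigma\neq\emptyset$, \[h(\sigma)=\Big(\sum_{i<|J(\sigma)|,\ \{i\}^\sigma(i)\uparrow}\omega^{J(\sigma)\restriction i}\Big)+\omega^{J(\sigma)}\cdot2\] (sum written in $\leq_{\mathrm{KB}}$-decreasing order of $i$ increasing). Then for all $\rho,\sigma\in T$ with $\sigma\subsetneq\rho$ we have $h(\rho)<h(\sigma)$ in $\boldsymbol\omega^{\mathcal{JT}(T)}$.
   Context: Strings are coded by natural numbers via a fixed computable coding with $\sigma\subsetneq\tau$ implying code$(\sigma)<$ code$(\tau)$. $\{i\}^\sigma(i)\uparrow$ means the $i$-th machine on input $i$ with oracle $\sigma$ does not halt in fewer than $|\sigma|$ steps. For finite $\sigma$: $t_{-1}=1$, $t_n=\max\{t_{n-1}+1,\mu t(\{n\}^{\sigma\restriction t}(n)\downarrow)\}$ ($t_n=t_{n-1}+1$ if no such $t$), and $J(\sigma)=\langle\sigma\restriction t_0,\dots,\sigma\restriction t_{k-1}\rangle$ with $k$ least such that $t_k>|\sigma|$; $\mathcal{JT}(T)=\{J(\sigma):\sigma\in T\}$. Kleene–Brouwer ordering: $\sigma\leq_{\mathrm{KB}}\tau$ iff $\sigma\supseteq\tau$ or there is $i$ with $\sigma\restriction i=\tau\restriction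 i$ and $\sigma(i)<\tau(i)$. For a linear ordering $\mathcal{L}$, $\boldsymbol\omega^{\mathcal{L}}$ is the set of finite nonincreasing strings $\langle x_0,\dots,x_{k-1}\rangle$ of elements of $\mathcal{L}$, written $\omega^{x_0}+\dots+\omega^{x_{k-1}}$ (with $\omega^x\cdot m$ meaning $m$ repetitions of $x$), ordered by: $\langle x_0,\dots,x_{k-1}\rangle\leq\langle y_0,\dots,y_{l-1}\rangle$ iff $k\leq l$ and $x_i=y_i$ for $i<k$, or at the least $i$ with $x_i\neq y_i$, $x_i<y_i$. *)

theory Defs
  imports Main "HOL-Library.Sublist"
begin

definition is_tree :: "nat list set \<Rightarrow> bool" where
  "is_tree T \<longleftrightarrow> (\<forall>\<sigma>\<in>T. \<forall>\<tau>. prefix \<tau> \<sigma> \<longrightarrow> \<tau> \<in> T)"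

text \<open>conv i s  models  {i}^s(i) converges (halts in fewer than |s| steps).
  tprev conv s n is t_(n-1); so t_n = tprev conv s (Suc n), with t_(-1) = 1.\<close>
fun tprev :: "(nat \<Rightarrow> nat list \<Rightarrow> bool) \<Rightarrow> nat list \<Rightarrow> nat \<Rightarrow> nat" where
  "tprev conv s 0 = 1"
| "tprev conv s (Suc n) =
     max (tprev conv s n + 1)
         (if (\<exists>t. conv n (take t s)) then (LEAST t. conv n (take t s)) else tprev conv s n + 1)"

definition tseq :: "(nat \<Rightarrow> nat list \<Rightarrow> bool) \<Rightarrow> nat list \<Rightarrow> nat \<Rightarrow> nat" where
  "tseq conv s n = tprev conv s (Suc n)"

definition Jlen :: "(nat \<Rightarrow> nat list \<Rightarrow> bool) \<Rightarrow> nat list \<Rightarrow> nat" where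
  "Jlen conv s = (LEAST k. tseq conv s k > length s)"

definition J :: "(nat list \<Rightarrow> nat) \<Rightarrow> (nat \<Rightarrow> nat list \<Rightarrow> bool) \<Rightarrow> nat list \<Rightarrow> nat list" where
  "J code conv s = map (\<lambda>i. code (take (tseq conv s i) s)) [0..<Jlen conv s]"

definition JT :: "(nat list \<Rightarrow> nat) \<Rightarrow> (nat \<Rightarrow> nat list \<Rightarrow> bool) \<Rightarrow> nat list set \<Rightarrow> nat list set" where
  "JT code conv T = J code conv ` T"

definition kb_le :: "nat list \<Rightarrow> nat list \<Rightarrow> bool" where
  "kb_le a b \<longleftrightarrow> prefix b a \<or>
     (\<exists>i. i < length a \<and> i < length b \<and> take i a = take i b \<and> a ! i < b ! i)"

text \<open>Ordering of omega^L (finite nonincreasing strings over L), given the order le of L.\<close>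
definition omega_le :: "('a \<Rightarrow> 'a \<Rightarrow> bool) \<Rightarrow> 'a list \<Rightarrow> 'a list \<Rightarrow> bool" where
  "omega_le le xs ys \<longleftrightarrow> prefix xs ys \<or>
     (\<exists>i. i < length xs \<and> i < length ys \<and> take i xs = take i ys \<and>
          xs ! i \<noteq> ys ! i \<and> le (xs ! i) (ys ! i))"

definition omega_less :: "('a \<Rightarrow> 'a \<Rightarrow> bool) \<Rightarrow> 'a list \<Rightarrow> 'a list \<Rightarrow> bool" where
  "omega_less le xs ys \<longleftrightarrow> omega_le le xs ys \<and> xs \<noteq> ys"

text \<open>The map h, as an element of omega^(JT(T)) written as list of exponents.\<close>
definition h :: "(nat list \<Rightarrow> nat) \<Rightarrow> (nat \<Rightarrow> nat list \<Rightarrow> bool) \<Rightarrow> nat list \<Rightarrow> nat list list" where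
  "h code conv s =
     (if s = [] then [[], [], []]
      else map (\<lambda>i. take i (J code conv s))
                 (filter (\<lambda>i. \<not> conv i s) [0..<length (J code conv s)])
           @ [J code conv s, J code conv s])"

end

theory Submission
  imports Defs
begin

lemma take_pre: "prefix s r \<Longrightarrow> t \<le> length s \<Longrightarrow> take t r = take t s"
  by (auto simp: prefix_def)

lemma ex_conv_iff:
  assumes mono: "\<And>i a b. prefix a b \<Longrightarrow> conv i a \<Longrightarrow> conv i b"
  shows "(\<exists>t. conv n (take t s)) = conv n s"
proof
  assume "\<exists>t. conv n (take t s)"
  then obtain t where "conv n (take t s)" by blast
  then show "conv n s" using mono take_is_prefix by blast
next
  assume "conv n s" then have "conv n (take (length s) s)" by simp
  then show "\<exists>t. conv n (take t s)" by blast
qed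

lemma tprev_Suc':
  assumes mono: "\<And>i a b. prefix a b \<Longrightarrow> conv i a \<Longrightarrow> conv i b"
  shows "tprev conv s (Suc n) = (if conv n s then max (tprev conv s n + 1) (LEAST t. conv n (take t s))
          else tprev conv s n + 1)"
  using ex_conv_iff[of conv n s, OF mono] by simp

lemma tprev_ge: "tprev conv s n \<ge> n + 1"
  by (induction n) auto

lemma tprev_smono: "strict_mono (tprev conv s)"
  unfolding strict_mono_Suc_iff by (auto simp: less_max_iff_disj)

lemma Jlen_props:
  shows "tseq conv s (Jlen conv s) > length s"
    and "k < Jlen conv s \<Longrightarrow> tseq conv s k \<le> length s"
    and "tseq conv s k \<le> length s \<Longrightarrow> k < Jlen conv s"
proof -
  have ex: "tseq conv s (length s) > length s"
    using tprev_ge[of "length s" conv s] tprev_ge[of "Suc (length s)" conv s]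
    unfolding tseq_def by simp
  show 1: "tseq conv s (Jlen conv s) > length s"
    unfolding Jlen_def by (rule LeastI[of _ "length s"]) (rule ex)
  show "k < Jlen conv s \<Longrightarrow> tseq conv s k \<le> length s"
    unfolding Jlen_def using not_less_Least by (metis not_le)
  assume a: "tseq conv s k \<le> length s"
  show "k < Jlen conv s"
  proof (rule ccontr)
    assume "\<not> k < Jlen conv s"
    then have "tseq conv s (Jlen conv s) \<le> tseq conv s k"
      unfolding tseq_def using strict_mono_less_eq[OF tprev_smono[of conv s]]
      by (simp del: tprev.simps)
    with 1 a show False by simp
  qed
qed

lemma least_eq:
  assumes mono: "\<And>i a b. prefix a b \<Longrightarrow> conv i a \<Longrightarrow> conv i b"
    and p: "prefix s r" and c: "conv n s"
  shows "(LEAST t. conv n (take t r)) = (LEAST t. conv n (take t s))"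
proof -
  let ?L = "LEAST t. conv n (take t s)"
  have cl: "conv n (take (length s) s)" using c by simp
  have L1: "conv n (take ?L s)" using LeastI[where P="\<lambda>t. conv n (take t s)", OF cl] .
  have L2: "?L \<le> length s" using Least_le[where P="\<lambda>t. conv n (take t s)", OF cl] .
  show ?thesis
  proof (rule Least_equality)
    show "conv n (take ?L r)" using L1 L2 take_pre[OF p] by simp
  next
    fix y assume y: "conv n (take y r)"
    show "?L \<le> y"
    proof (rule ccontr)
      assume "\<not> ?L \<le> y"
      then have "y \<le> length s" using L2 by simp
      then have "conv n (take y s)" using y take_pre[OF p] by simp
      then have "?L \<le> y" by (rule Least_le)
      with \<open>\<not> ?L \<le> y\<close> show False by simp
    qed
  qed
qed

lemma least_le_len:
  assumes "conv n r"
  shows "(LEAST t. conv n (take t r)) \<le> length r"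
  using assms by (intro Least_le) simp

lemma agree:
  assumes mono: "\<And>i a b. prefix a b \<Longrightarrow> conv i a \<Longrightarrow> conv i b"
    and p: "prefix s r"
    and D: "\<And>n. n < D \<Longrightarrow> conv n r = conv n s"
  shows "n \<le> D \<Longrightarrow> tprev conv r n = tprev conv s n"
proof (induction n)
  case 0 then show ?case by simp
next
  case (Suc n)
  then have IH: "tprev conv r n = tprev conv s n" and nD: "n < D" by auto
  show ?case
    using IH D[OF nD] least_eq[where conv=conv and n=n, OF mono p] tprev_Suc'[where conv=conv and s=r and n=n, OF mono] tprev_Suc'[where conv=conv and s=s and n=n, OF mono]
    by auto
qed

lemma J_len: "length (J code conv s) = Jlen conv s"
  by (simp add: J_def)

lemma J_take: "D \<le> Jlen conv s \<Longrightarrow>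
   take D (J code conv s) = map (\<lambda>i. code (take (tseq conv s i) s)) [0..<D]"
  by (simp add: J_def take_map min_def)

lemma idx:
  assumes "y \<noteq> z" "kb_le y z"
  shows "omega_less kb_le (L @ y # r1) (L @ z # r2)"
  unfolding omega_less_def omega_le_def
  using assms by (intro conjI disjI2 exI[of _ "length L"]) (auto simp: nth_append)

lemma kb_pre: "prefix z y \<Longrightarrow> kb_le y z"
  by (simp add: kb_le_def)

lemma pre_takes: "m \<le> j \<Longrightarrow> prefix (take m X) (take j X)"
proof -
  assume "m \<le> j"
  then have "take m X = take m (take j X)" by (simp add: min_def)
  then show ?thesis by (metis take_is_prefix)
qed

lemma hd_part:
  assumes "a \<le> length X"
  shows "\<exists>j r. a \<le> j \<and> j \<le> length X \<and>
     map (\<lambda>i. take i X) (filter P [a..<length X]) @ [X, X] = take j X # r"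
proof (cases "filter P [a..<length X]")
  case Nil
  then show ?thesis using assms by (intro exI[of _ "length X"] exI[of _ "[X]"]) simp
next
  case (Cons i rest)
  then have "i \<in> set (filter P [a..<length X])" by simp
  then have "a \<le> i" "i < length X" by auto
  then show ?thesis using Cons by (intro exI[of _ i]) auto
qed

lemma tail:
  assumes "m < length X" "take m X = Y"
  shows "omega_less kb_le (L @ map (\<lambda>i. take i X) (filter P [m..<length X]) @ [X,X]) (L @ Y # Y # rest)"
proof -
  have up: "[m..<length X] = m # [Suc m..<length X]" using assms(1) by (simp add: upt_conv_Cons)
  obtain j r where j: "Suc m \<le> j" "j \<le> length X"
    and R: "map (\<lambda>i. take i X) (filter P [Suc m..<length X]) @ [X, X] = take j X # r"
    using hd_part[of "Suc m" X P] assms(1) by auto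
  have ne: "take j X \<noteq> Y" using j assms by (metis Suc_le_eq length_take min_absorb2 less_not_refl order.strict_trans1 less_imp_le)
  have kb: "kb_le (take j X) Y" using assms(2) j pre_takes[of m j X] by (intro kb_pre) simp
  show ?thesis
  proof (cases "P m")
    case True
    then have "L @ map (\<lambda>i. take i X) (filter P [m..<length X]) @ [X,X] = (L @ [Y]) @ take j X # r"
      using up R assms(2) by simp
    moreover have "L @ Y # Y # rest = (L @ [Y]) @ Y # rest" by simp
    ultimately show ?thesis using idx[OF ne kb] by metis
  next
    case False
    then have "L @ map (\<lambda>i. take i X) (filter P [m..<length X]) @ [X,X] = L @ take j X # r"
      using up R by simp
    then show ?thesis using idx[OF ne kb] by metis
  qed
qed

lemma upt_split0: "a \<le> b \<Longrightarrow> [0..<b] = [0..<a] @ [a..<b]"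
  by (metis le_add_diff_inverse upt_add_eq_append zero_le)

theorem lemma4p11:
  fixes T :: "nat list set"
    and code :: "nat list \<Rightarrow> nat"
    and conv :: "nat \<Rightarrow> nat list \<Rightarrow> bool"
    and \<sigma> \<rho> :: "nat list"
  assumes "is_tree T"
    and "inj code"
    and "\<And>a b. strict_prefix a b \<Longrightarrow> code a < code b"
    and "\<And>i. \<not> conv i []"
    and "\<And>i a b. prefix a b \<Longrightarrow> conv i a \<Longrightarrow> conv i b"
    and "\<rho> \<in> T" and "\<sigma> \<in> T" and "strict_prefix \<sigma> \<rho>"
  shows "omega_less kb_le (h code conv \<rho>) (h code conv \<sigma>)"
proof -
  note mono = assms(5)
  have pre: "prefix \<sigma> \<rho>" and lt: "length \<sigma> < length \<rho>"
    using assms(8) by (auto simp: strict_prefix_def prefix_def)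
  have rne: "\<rho> \<noteq> []" using lt by auto
  define m where "m = Jlen conv \<sigma>"
  define M where "M = Jlen conv \<rho>"
  define Js where "Js = J code conv \<sigma>"
  define Jr where "Jr = J code conv \<rho>"
  have lJs: "length Js = m" and lJr: "length Jr = M"
    unfolding Js_def Jr_def m_def M_def by (simp_all add: J_len)
  have hr: "h code conv \<rho> = map (\<lambda>i. take i Jr) (filter (\<lambda>i. \<not> conv i \<rho>) [0..<M]) @ [Jr, Jr]"
    using rne unfolding h_def Jr_def[symmetric] lJr[symmetric] by simp
  show ?thesis
  proof (cases "\<sigma> = []")
    case True
    then have hs: "h code conv \<sigma> = [] @ [] # [] # [[]]" by (simp add: h_def)
    show ?thesis
    proof (cases "M = 0")
      case True
      then show ?thesis unfolding hr hs omega_less_def omega_le_def using lJr by simp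
    next
      case False
      have "omega_less kb_le ([] @ map (\<lambda>i. take i Jr) (filter (\<lambda>i. \<not> conv i \<rho>) [0..<length Jr]) @ [Jr, Jr])
              ([] @ [] # [] # [[]])"
        by (rule tail) (use False lJr in auto)
      then show ?thesis unfolding hr hs lJr by simp
    qed
  next
    case sne: False
    have hs: "h code conv \<sigma> = map (\<lambda>i. take i Js) (filter (\<lambda>i. \<not> conv i \<sigma>) [0..<m]) @ [Js, Js]"
      using sne unfolding h_def Js_def[symmetric] lJs[symmetric] by simp
    define D where "D = (LEAST n. n = m \<or> (conv n \<rho> \<and> \<not> conv n \<sigma>))"
    have Dm: "D \<le> m" unfolding D_def by (rule Least_le) simp
    have Dcase: "D = m \<or> (conv D \<rho> \<and> \<not> conv D \<sigma>)"
      unfolding D_def by (rule LeastI[of _ m]) simp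
    have Deq: "conv n \<rho> = conv n \<sigma>" if "n < D" for n
    proof -
      have "\<not> (n = m \<or> (conv n \<rho> \<and> \<not> conv n \<sigma>))"
        using that unfolding D_def by (rule not_less_Least)
      moreover have "conv n \<sigma> \<Longrightarrow> conv n \<rho>" using mono pre by blast
      ultimately show ?thesis by blast
    qed
    have ag: "tprev conv \<rho> n = tprev conv \<sigma> n" if "n \<le> D" for n
      by (rule agree[where conv=conv and s=\<sigma> and r=\<rho> and D=D and n=n]) (use mono pre Deq that in blast)+
    have tsle: "tseq conv \<sigma> k \<le> length \<sigma>" if "k < m" for k
      using Jlen_props(2)[of k conv \<sigma>] that m_def by simp
    have tD: "tprev conv \<sigma> D \<le> length \<sigma>"
    proof (cases D)
      case 0 then show ?thesis using sne by (cases \<sigma>) auto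
    next
      case (Suc k)
      then have "k < m" using Dm by simp
      then show ?thesis using tsle[of k] Suc by (simp add: tseq_def del: tprev.simps)
    qed
    have exD: "(\<exists>t. conv D (take t \<rho>)) = conv D \<rho>"
      by (rule ex_conv_iff) (use mono in blast)
    have "tseq conv \<rho> D \<le> length \<rho>"
      unfolding tseq_def
      using ag[of D] tD lt least_le_len[of conv D \<rho>] exD by auto
    then have DM: "D < M" unfolding M_def by (rule Jlen_props(3))
    have tk: "take D Jr = take D Js"
    proof -
      have "take D Jr = map (\<lambda>i. code (take (tseq conv \<rho> i) \<rho>)) [0..<D]"
        unfolding Jr_def M_def by (rule J_take) (use DM M_def in simp)
      also have "\<dots> = map (\<lambda>i. code (take (tseq conv \<sigma> i) \<sigma>)) [0..<D]"
      proof (rule map_cong[OF refl])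
        fix i assume "i \<in> set [0..<D]"
        then have i: "i < D" by simp
        then have "tseq conv \<rho> i = tseq conv \<sigma> i" unfolding tseq_def using ag[of "Suc i"] by simp
        moreover have "tseq conv \<sigma> i \<le> length \<sigma>" using tsle i Dm by simp
        ultimately show "code (take (tseq conv \<rho> i) \<rho>) = code (take (tseq conv \<sigma> i) \<sigma>)"
          using take_pre[OF pre] by simp
      qed
      also have "\<dots> = take D Js"
        unfolding Js_def m_def by (rule J_take[symmetric]) (use Dm m_def in simp)
      finally show ?thesis .
    qed
    have fe: "filter (\<lambda>i. \<not> conv i \<rho>) [0..<D] = filter (\<lambda>i. \<not> conv i \<sigma>) [0..<D]"
      by (rule filter_cong) (auto simp: Deq)
    define L where "L = map (\<lambda>i. take i Js) (filter (\<lambda>i. \<not> conv i \<sigma>) [0..<D])"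
    have Le: "map (\<lambda>i. take i Jr) (filter (\<lambda>i. \<not> conv i \<rho>) [0..<D]) = L"
      unfolding L_def fe
    proof (rule map_cong[OF refl])
      fix i assume "i \<in> set (filter (\<lambda>i. \<not> conv i \<sigma>) [0..<D])"
      then have "i \<le> D" by simp
      then have "take i Jr = take i (take D Jr)" "take i Js = take i (take D Js)" by (simp_all add: min_def)
      then show "take i Jr = take i Js" using tk by simp
    qed
    have hr2: "h code conv \<rho> = L @ map (\<lambda>i. take i Jr) (filter (\<lambda>i. \<not> conv i \<rho>) [D..<M]) @ [Jr, Jr]"
      unfolding hr upt_split0[OF less_imp_le[OF DM]] Le[symmetric] by simp
    have hs2: "h code conv \<sigma> = L @ map (\<lambda>i. take i Js) (filter (\<lambda>i. \<not> conv i \<sigma>) [D..<m]) @ [Js, Js]"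
      unfolding hs upt_split0[OF Dm] L_def by simp
    show ?thesis
    proof (cases "D = m")
      case True
      have "take m Jr = Js" using tk True lJs by simp
      then have "omega_less kb_le (L @ map (\<lambda>i. take i Jr) (filter (\<lambda>i. \<not> conv i \<rho>) [m..<length Jr]) @ [Jr, Jr])
              (L @ Js # Js # [])"
        by (intro tail) (use DM True lJr in auto)
      then show ?thesis unfolding hr2 hs2 True lJr by simp
    next
      case False
      with Dcase Dm have cD: "conv D \<rho>" "\<not> conv D \<sigma>" and Dm': "D < m" by auto
      have hs3: "h code conv \<sigma> = L @ take D Js # map (\<lambda>i. take i Js) (filter (\<lambda>i. \<not> conv i \<sigma>) [Suc D..<m]) @ [Js, Js]"
        unfolding hs2 using Dm' cD by (simp add: upt_conv_Cons)
      obtain j r where j: "Suc D \<le> j" "j \<le> length Jr"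
        and R: "map (\<lambda>i. take i Jr) (filter (\<lambda>i. \<not> conv i \<rho>) [Suc D..<length Jr]) @ [Jr, Jr] = take j Jr # r"
        using hd_part[of "Suc D" Jr "\<lambda>i. \<not> conv i \<rho>"] DM lJr by auto
      have hr3: "h code conv \<rho> = L @ take j Jr # r"
        unfolding hr2 using DM cD R lJr by (simp add: upt_conv_Cons)
      have ne: "take j Jr \<noteq> take D Js"
      proof
        assume "take j Jr = take D Js"
        then have "length (take j Jr) = length (take D Js)" by simp
        then show False using j Dm' lJs by simp
      qed
      have kb: "kb_le (take j Jr) (take D Js)"
        using pre_takes[of D j Jr] j tk by (intro kb_pre) simp
      show ?thesis unfolding hr3 hs3 by (rule idx[OF ne kb])
    qed
  qed
qed

end
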